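(* Let $n\ge 3$ and let $\mathcal{H}$ be the associating hypergraph on $M(D_n,2)$. Then the covering number is $\rho(\mathcal{H})=n+\lceil n/3\rceil$.
   Context: $D_n=\langle x,y\mid x^n=y^2=1,\ xy=yx^{-1}\rangle$. $M(D_n,2)=\{(g,\alpha): g\in D_n,\ \alpha\in\mathbb{Z}_2\}$ with $(g_1,\alpha_1)\circ(g_2,\alpha_2)=(g_1^{1-\alpha_2} g_2^{(-1)^{\alpha_1}} g_1^{\alpha_2},\ \alpha_1+\alpha_2)$. The associating hypergraph $\mathcal{H}$ has vertex set $M(D_n,2)$ ($4n$ vertices), and a 3-element set $\{a,b,c\}$ of distinct elements is a hyperedge when $(a\circ b)\circ c=a\circ(b\circ c)$. The covering number $\rho(\mathcal{H})$ is the minimum number of hyperedges whose union is the whole vertex set. *)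

theory Defs
  imports Complex_Main
begin

text \<open>Concrete model of the dihedral group D_n: the pair (k, s) with k < n stands for
  x^k y^s (s = True meaning y^1). Relations x^n = y^2 = 1 and y x = x^(-1) y give
  (x^a y^s)(x^b y^t) = x^(a + (-1)^s b) y^(s + t).\<close>

type_synonym dih = "nat \<times> bool"

definition dih_carrier :: "nat \<Rightarrow> dih set" where
  "dih_carrier n = {(k, s). k < n}"

definition dih_mult :: "nat \<Rightarrow> dih \<Rightarrow> dih \<Rightarrow> dih" where
  "dih_mult n g h = (case g of (a, s) \<Rightarrow> case h of (b, t) \<Rightarrow>
     ((if s then a + (n - b) else a + b) mod n, s \<noteq> t))"

definition dih_inv :: "nat \<Rightarrow> dih \<Rightarrow> dih" where
  "dih_inv n g = (case g of (a, s) \<Rightarrow> if s then (a, s) else ((n - a) mod n, False))"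

text \<open>Elements of M(D_n,2): (g, alpha) with alpha in Z_2 encoded as bool (True = 1).\<close>

type_synonym mvert = "dih \<times> bool"

definition M_carrier :: "nat \<Rightarrow> mvert set" where
  "M_carrier n = dih_carrier n \<times> UNIV"

text \<open>(g1,a1) o (g2,a2) = (g1^(1-a2) g2^((-1)^a1) g1^(a2), a1 + a2).\<close>
definition M_op :: "nat \<Rightarrow> mvert \<Rightarrow> mvert \<Rightarrow> mvert" where
  "M_op n p q = (case p of (g1, a1) \<Rightarrow> case q of (g2, a2) \<Rightarrow>
     (let g2' = (if a1 then dih_inv n g2 else g2) in
       (if a2 then dih_mult n g2' g1 else dih_mult n g1 g2'), a1 \<noteq> a2))"

definition assoc_hyperedges :: "nat \<Rightarrow> mvert set set" where
  "assoc_hyperedges n = {e. \<exists>a b c. a \<in> M_carrier n \<and> b \<in> M_carrier n \<and> c \<in> M_carrier n \<and>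
      a \<noteq> b \<and> b \<noteq> c \<and> a \<noteq> c \<and> e = {a, b, c} \<and>
      M_op n (M_op n a b) c = M_op n a (M_op n b c)}"

definition covering_number :: "nat \<Rightarrow> nat" where
  "covering_number n = (LEAST k. \<exists>C. C \<subseteq> assoc_hyperedges n \<and> finite C \<and> card C = k \<and>
      \<Union>C = M_carrier n)"

end

theory Submission imports Defs begin

lemma natmod_lt[simp]: "0 < n \<Longrightarrow> nat (z mod int n) < n"
  by (simp add: nat_less_iff)
lemma natmod_le[simp]: "0 < n \<Longrightarrow> nat (z mod int n) \<le> n"
  using natmod_lt less_imp_le by blast
lemma int_natmod[simp]: "0 < n \<Longrightarrow> int (nat (z mod int n)) = z mod int n"
  by simp

lemma dm: assumes "b \<le> n" shows "dih_mult n (a,s) (b,t) = (nat ((int a + (if s then - int b else int b)) mod int n), s \<noteq> t)"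
proof -
  have e: "(int a + int n - int b) mod int n = (int a - int b) mod int n" for a b
  proof -
    have "int a + int n - int b = (int a - int b) + int n" by simp
    then show ?thesis by (metis mod_add_self2)
  qed
  show ?thesis using assms
  unfolding dih_mult_def
  by (auto simp: nat_mod_as_int of_nat_diff algebra_simps mod_simps e)
qed

lemma di: "a \<le> n \<Longrightarrow> dih_inv n (a,s) = (if s then (a,s) else (nat ((- int a) mod int n), False))"
  unfolding dih_inv_def
  by (auto simp: nat_mod_as_int of_nat_diff algebra_simps mod_simps)

lemma R0: "0 < n \<Longrightarrow> a < n \<Longrightarrow> b < n \<Longrightarrow> c < n \<Longrightarrow>
  M_op n (M_op n ((a,False),False) ((b,False),False)) ((c,False),False) = M_op n ((a,False),False) (M_op n ((b,False),False) ((c,False),False))"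
  by (simp add: M_op_def dm di mod_simps algebra_simps)
lemma S0: "0 < n \<Longrightarrow> a < n \<Longrightarrow> b < n \<Longrightarrow> c < n \<Longrightarrow>
  M_op n (M_op n ((a,True),False) ((b,True),False)) ((c,True),False) = M_op n ((a,True),False) (M_op n ((b,True),False) ((c,True),False))"
  by (simp add: M_op_def dm di mod_simps algebra_simps)
lemma R1: "0 < n \<Longrightarrow> a < n \<Longrightarrow> b < n \<Longrightarrow> c < n \<Longrightarrow>
  M_op n (M_op n ((a,False),True) ((b,False),True)) ((c,False),True) = M_op n ((a,False),True) (M_op n ((b,False),True) ((c,False),True))"
  by (simp add: M_op_def dm di mod_simps algebra_simps)
lemma S1: "0 < n \<Longrightarrow> a < n \<Longrightarrow> b < n \<Longrightarrow> c < n \<Longrightarrow>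
  M_op n (M_op n ((a,True),True) ((b,True),True)) ((c,True),True) = M_op n ((a,True),True) (M_op n ((b,True),True) ((c,True),True))"
  by (simp add: M_op_def dm di mod_simps algebra_simps)
lemma RRR: "0 < n \<Longrightarrow> a < n \<Longrightarrow> b < n \<Longrightarrow> c < n \<Longrightarrow>
  M_op n (M_op n ((a,False),False) ((b,False),False)) ((c,False),True) = M_op n ((a,False),False) (M_op n ((b,False),False) ((c,False),True))"
  by (simp add: M_op_def dm di mod_simps algebra_simps)
lemma RSS: "0 < n \<Longrightarrow> a < n \<Longrightarrow> b < n \<Longrightarrow> 
  M_op n (M_op n ((a,False),True) ((b,True),False)) (((a+b) mod n,True),True) = M_op n ((a,False),True) (M_op n ((b,True),False) (((a+b) mod n,True),True))"
  by (simp add: M_op_def dm di mod_simps algebra_simps nat_mod_as_int)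
lemma RSS': "0 < n \<Longrightarrow> a < n \<Longrightarrow> b < n \<Longrightarrow> c = (a+b) mod n \<Longrightarrow>
  M_op n (M_op n ((a,False),True) ((b,True),False)) ((c,True),True) = M_op n ((a,False),True) (M_op n ((b,True),False) ((c,True),True))"
  using RSS by blast

lemma memM[simp]: "((k,s),al) \<in> M_carrier n \<longleftrightarrow> k < n"
  by (simp add: M_carrier_def dih_carrier_def)

lemma edgeI: "a \<in> M_carrier n \<Longrightarrow> b \<in> M_carrier n \<Longrightarrow> c \<in> M_carrier n \<Longrightarrow> a \<noteq> b \<Longrightarrow> b \<noteq> c \<Longrightarrow> a \<noteq> c
  \<Longrightarrow> M_op n (M_op n a b) c = M_op n a (M_op n b c) \<Longrightarrow> {a,b,c} \<in> assoc_hyperedges n"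
  unfolding assoc_hyperedges_def by blast

lemma cls_assoc: "0 < n \<Longrightarrow> a < n \<Longrightarrow> b < n \<Longrightarrow> c < n \<Longrightarrow>
  M_op n (M_op n ((a,s),al) ((b,s),al)) ((c,s),al) = M_op n ((a,s),al) (M_op n ((b,s),al) ((c,s),al))"
  by (cases s; cases al) (simp_all add: R0 S0 R1 S1)

lemma tri_edge: "3*i+2 < n \<Longrightarrow> {((3*i,s),al), ((3*i+1,s),al), ((3*i+2,s),al)} \<in> assoc_hyperedges n"
  by (rule edgeI) (auto intro: cls_assoc)

lemma rss_edge: "0 < n \<Longrightarrow> a < n \<Longrightarrow> b < n \<Longrightarrow> c = (a+b) mod n \<Longrightarrow>
   {((a,False),True), ((b,True),False), ((c,True),True)} \<in> assoc_hyperedges n"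
  by (rule edgeI) (simp_all add: RSS')

lemma rrr_edge: "0 < n \<Longrightarrow> a < n \<Longrightarrow> b < n \<Longrightarrow> c < n \<Longrightarrow> a \<noteq> b \<Longrightarrow>
   {((a,False),False), ((b,False),False), ((c,False),True)} \<in> assoc_hyperedges n"
  by (rule edgeI) (simp_all add: RRR)

lemma card_le3: "card {a,b,c} \<le> 3"
  by (auto simp: card_insert_if)

lemma card_le2: "card {a,b} \<le> 2"
  by (auto simp: card_insert_if)

lemma cardM: "card (M_carrier n) = 4 * n"
proof -
  have "M_carrier n = ({..<n} \<times> (UNIV::bool set)) \<times> (UNIV::bool set)"
    by (auto simp: M_carrier_def dih_carrier_def)
  then show ?thesis by (simp add: card_cartesian_product)
qed

lemma lower:
  assumes "C \<subseteq> assoc_hyperedges n" "\<Union>C = M_carrier n" "finite C"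
  shows "4*n \<le> 3 * card C"
proof -
  have "4*n = card (\<Union>C)" using assms(2) cardM by simp
  also have "\<dots> \<le> sum card C" by (rule card_Union_le_sum_card)
  also have "\<dots> \<le> sum (\<lambda>_. 3) C"
  proof (rule sum_mono)
    fix e assume "e \<in> C"
    then have "e \<in> assoc_hyperedges n" using assms(1) by blast
    then obtain a b c where "e = {a,b,c}" unfolding assoc_hyperedges_def by blast
    then show "card e \<le> 3" using card_le3 by simp
  qed
  also have "\<dots> = 3 * card C" by simp
  finally show ?thesis .
qed

lemma upper:
  assumes n3: "n \<ge> 3" and F: "F \<subseteq> assoc_hyperedges n" "finite F" "card F \<le> f" "\<Union>F \<subseteq> M_carrier n"
    and cov: "\<And>k s al. 3*(n div 3) \<le> k \<Longrightarrow> k < n \<Longrightarrow> ((k,s),al) \<in> \<Union>F"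
  shows "\<exists>C. C \<subseteq> assoc_hyperedges n \<and> finite C \<and> card C \<le> 4*(n div 3) + f \<and> \<Union>C = M_carrier n"
proof -
  define T where "T = (\<lambda>(i,s,al). {((3*i,s),al), ((3*i+1,s),al), ((3*i+2,s),al)}) ` ({..<n div 3} \<times> (UNIV::bool set) \<times> (UNIV::bool set))"
  have Tsub: "T \<subseteq> assoc_hyperedges n"
  proof
    fix e assume "e \<in> T"
    then obtain i s al where "i < n div 3" and e: "e = {((3*i,s),al), ((3*i+1,s),al), ((3*i+2,s),al)}"
      unfolding T_def by auto
    then have "3*i+2 < n" by presburger
    then show "e \<in> assoc_hyperedges n" using e tri_edge by blast
  qed
  have Tfin: "finite T" unfolding T_def by simp
  have Tcard: "card T \<le> 4*(n div 3)"
  proof -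
    have "card T \<le> card ({..<n div 3} \<times> (UNIV::bool set) \<times> (UNIV::bool set))"
      unfolding T_def by (rule card_image_le) simp
    also have "\<dots> = 4*(n div 3)"
    proof -
      have u: "(UNIV::bool set) = {False, True}" by auto
      show ?thesis unfolding u by (simp add: card_cartesian_product)
    qed
    finally show ?thesis .
  qed
  have TM: "\<Union>T \<subseteq> M_carrier n"
  proof
    fix x assume "x \<in> \<Union>T"
    then obtain i s al where "i < n div 3" and x: "x \<in> {((3*i,s),al), ((3*i+1,s),al), ((3*i+2,s),al)}"
      unfolding T_def by auto
    then have "3*i+2 < n" by presburger
    then show "x \<in> M_carrier n" using x by auto
  qed
  have covall: "M_carrier n \<subseteq> \<Union>(T \<union> F)"
  proof
    fix x assume "x \<in> M_carrier n"
    then obtain k s al where x: "x = ((k,s),al)" and kn: "k < n"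
      by (cases x) (auto simp: M_carrier_def dih_carrier_def)
    show "x \<in> \<Union>(T \<union> F)"
    proof (cases "k < 3*(n div 3)")
      case True
      define i where "i = k div 3"
      have i: "i < n div 3" using True unfolding i_def by presburger
      have "k = 3*i \<or> k = 3*i+1 \<or> k = 3*i+2" unfolding i_def by presburger
      then have "x \<in> {((3*i,s),al), ((3*i+1,s),al), ((3*i+2,s),al)}" using x by auto
      moreover have "{((3*i,s),al), ((3*i+1,s),al), ((3*i+2,s),al)} \<in> T"
        unfolding T_def by (rule image_eqI[where x="(i,s,al)"]) (use i in simp_all)
      ultimately show ?thesis by blast
    next
      case False
      then have "((k,s),al) \<in> \<Union>F" using cov[of k s al] kn by simp
      then show ?thesis using x by blast
    qed
  qed
  show ?thesis
  proof (intro exI conjI)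
    show "T \<union> F \<subseteq> assoc_hyperedges n" using Tsub F by blast
    show "finite (T \<union> F)" using Tfin F by blast
    show "card (T \<union> F) \<le> 4*(n div 3) + f"
      using card_Un_le[of T F] Tcard F(3) by linarith
    show "\<Union>(T \<union> F) = M_carrier n" using covall TM F(4) by blast
  qed
qed

lemma ceil3: "nat \<lceil>real n / 3\<rceil> = (n+2) div 3"
proof -
  have "\<lceil>real n / 3\<rceil> = int ((n+2) div 3)"
  proof (rule ceiling_unique)
    have a: "3 * ((n+2) div 3) < n + 3" and b: "n \<le> 3 * ((n+2) div 3)" by presburger+
    have "real (3 * ((n+2) div 3)) < real (n+3)" using a by linarith
    then show "real_of_int (int ((n + 2) div 3)) - 1 < real n / 3" by simp
    have "real n \<le> real (3 * ((n+2) div 3))" using b by linarith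
    then show "real n / 3 \<le> real_of_int (int ((n + 2) div 3))" by simp
  qed
  then show ?thesis by simp
qed

lemma br0: assumes "n \<ge> 3" and r: "n mod 3 = 0"
  shows "\<exists>C. C \<subseteq> assoc_hyperedges n \<and> finite C \<and> card C \<le> 4*(n div 3) + 0 \<and> \<Union>C = M_carrier n"
proof -
  have n0: "0 < n" using assms by simp
      show "\<exists>C. C \<subseteq> assoc_hyperedges n \<and> finite C \<and> card C \<le> 4*(n div 3) + 0 \<and> \<Union>C = M_carrier n"
        by (rule upper[OF assms(1), of "{}"]) (use r in auto)
qed

lemma br1: assumes "n \<ge> 3" and r: "n mod 3 = 1"
  shows "\<exists>C. C \<subseteq> assoc_hyperedges n \<and> finite C \<and> card C \<le> 4*(n div 3) + 2 \<and> \<Union>C = M_carrier n"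
proof -
  have n0: "0 < n" using assms by simp
      define F where "F = {{((n-1,False),False), ((0,False),False), ((n-1,False),True)},
                           {((0,False),True), ((n-1,True),False), ((n-1,True),True)}}"
      have e1: "{((n-1,False),False), ((0,False),False), ((n-1,False),True)} \<in> assoc_hyperedges n"
        by (rule rrr_edge) (use assms(1) in linarith)+
      have e2: "{((0,False),True), ((n-1,True),False), ((n-1,True),True)} \<in> assoc_hyperedges n"
        by (rule rss_edge) (use assms(1) in simp)+
      have "F \<subseteq> assoc_hyperedges n" unfolding F_def using e1 e2 by simp
      moreover have "finite F" "card F \<le> 2" unfolding F_def
        by (simp, rule card_le2)
      moreover have "\<Union>F \<subseteq> M_carrier n" unfolding F_def using n0 by auto
      moreover have "((k,s),al) \<in> \<Union>F" if "3*(n div 3) \<le> k" "k < n" for k s al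
      proof -
        have "k = n-1" using that r by presburger
        then show ?thesis unfolding F_def by (cases s; cases al) simp_all
      qed
      ultimately show "\<exists>C. C \<subseteq> assoc_hyperedges n \<and> finite C \<and> card C \<le> 4*(n div 3) + 2 \<and> \<Union>C = M_carrier n"
        using upper[OF assms(1), of F 2] by blast
qed

lemma br2: assumes "n \<ge> 3" and r: "n mod 3 = 2"
  shows "\<exists>C. C \<subseteq> assoc_hyperedges n \<and> finite C \<and> card C \<le> 4*(n div 3) + 3 \<and> \<Union>C = M_carrier n"
proof -
  have n0: "0 < n" using assms by simp
      define F where "F = {{((n-2,False),False), ((n-1,False),False), ((n-2,False),True)},
                           {((n-1,False),True), ((n-1,True),False), ((n-2,True),True)},
                           {((1,False),True), ((n-2,True),False), ((n-1,True),True)}}"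
      have m1: "n - 2 = (n - 1 + (n - 1)) mod n"
      proof -
        have e: "n - 1 + (n - 1) = (n - 2) + n" using assms by linarith
        have f: "((n-2) + n) mod n = (n-2) mod n" by (rule mod_add_self2)
        have g: "(n-2) mod n = n-2" using assms by simp
        show ?thesis unfolding e f g ..
      qed
      have m2: "n - 1 = (1 + (n - 2)) mod n" using assms by simp
      have e1: "{((n-2,False),False), ((n-1,False),False), ((n-2,False),True)} \<in> assoc_hyperedges n"
        by (rule rrr_edge) (use assms(1) in linarith)+
      have e2: "{((n-1,False),True), ((n-1,True),False), ((n-2,True),True)} \<in> assoc_hyperedges n"
        by (rule rss_edge[OF n0 _ _ m1]) (use assms(1) in linarith)+
      have e3: "{((1,False),True), ((n-2,True),False), ((n-1,True),True)} \<in> assoc_hyperedges n"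
        by (rule rss_edge[OF n0 _ _ m2]) (use assms(1) in linarith)+
      have "F \<subseteq> assoc_hyperedges n" unfolding F_def using e1 e2 e3 by simp
      moreover have "finite F" "card F \<le> 3" unfolding F_def
        by (simp, rule card_le3)
      moreover have "\<Union>F \<subseteq> M_carrier n" unfolding F_def using n0 assms by auto
      moreover have "((k,s),al) \<in> \<Union>F" if "3*(n div 3) \<le> k" "k < n" for k s al
      proof -
        have "k = n-1 \<or> k = n-2" using that r by presburger
        then show ?thesis unfolding F_def by (cases s; cases al; elim disjE) simp_all
      qed
      ultimately show "\<exists>C. C \<subseteq> assoc_hyperedges n \<and> finite C \<and> card C \<le> 4*(n div 3) + 3 \<and> \<Union>C = M_carrier n"
        using upper[OF assms(1), of F 3] by blast
qed

theorem mainTheorem7: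
  fixes n :: nat
  assumes "n \<ge> 3"
  shows "covering_number n = n + nat \<lceil>real n / 3\<rceil>"
proof -
  define K where "K = n + (n+2) div 3"
  have ex: "\<exists>C. C \<subseteq> assoc_hyperedges n \<and> finite C \<and> card C \<le> K \<and> \<Union>C = M_carrier n"
  proof -
    have "n mod 3 = 0 \<or> n mod 3 = 1 \<or> n mod 3 = 2" by presburger
    then show ?thesis
    proof (elim disjE)
      assume r: "n mod 3 = 0"
      have "K = 4*(n div 3) + 0" unfolding K_def using r by presburger
      then show ?thesis using br0[OF assms r] by (simp only:)
    next
      assume r: "n mod 3 = 1"
      have "K = 4*(n div 3) + 2" unfolding K_def using r by presburger
      then show ?thesis using br1[OF assms r] by (simp only:)
    next
      assume r: "n mod 3 = 2"
      have "K = 4*(n div 3) + 3" unfolding K_def using r by presburger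
      then show ?thesis using br2[OF assms r] by (simp only:)
    qed
  qed
  define P where "P = (\<lambda>k. \<exists>C. C \<subseteq> assoc_hyperedges n \<and> finite C \<and> card C = k \<and> \<Union>C = M_carrier n)"
  have cn: "covering_number n = (LEAST k. P k)" unfolding covering_number_def P_def by simp
  from ex obtain C0 where C0: "C0 \<subseteq> assoc_hyperedges n" "finite C0" "card C0 \<le> K" "\<Union>C0 = M_carrier n" by blast
  have P0: "P (card C0)" unfolding P_def using C0 by blast
  have le: "(LEAST k. P k) \<le> K" using Least_le[of P, OF P0] C0(3) by linarith
  have "P (LEAST k. P k)" using LeastI[of P, OF P0] .
  then obtain C where C: "C \<subseteq> assoc_hyperedges n" "finite C" "card C = (LEAST k. P k)" "\<Union>C = M_carrier n"
    unfolding P_def by blast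
  have "4*n \<le> 3 * card C" using lower[OF C(1) C(4) C(2)] .
  then have ge: "K \<le> (LEAST k. P k)" using C(3) unfolding K_def by linarith
  show ?thesis using le ge cn ceil3 unfolding K_def by linarith
qed

end
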